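(* Let $M$ be a finite-dimensional quantum system with $\dim\mathcal H_M\ge 2$, let $P$ be a qubit with basis $\{|0\rangle,|1\rangle\}$, and let $|\psi_0\rangle\in\mathcal H_M$ be a unit vector. Let $\mathcal E_0(\cdot)=|\psi_0\rangle\langle\psi_0|\operatorname{Tr}[\cdot]$ be the pure erasure channel on $M$ and $\mathcal C=\mathcal E_0\otimes\mathcal I_P$, where $\mathcal I_P$ is the identity channel on $P$. Let $A$ and $B$ be copies of $M$, $\widetilde A=A\oplus\mathrm{Vac}$, $\widetilde B=B\oplus\mathrm{Vac}$, where $\mathrm{Vac}$ is a one-dimensional sector spanned by $|\mathrm{vac}\rangle$, and let $U:\mathcal H_M\otimes\mathcal H_P\to(\mathcal H_A\otimes\mathcal H_{\mathrm{Vac}})\oplus(\mathcal H_{\mathrm{Vac}}\otimes\mathcal H_B)\subseteq\mathcal H_{\widetilde A}\otimes\mathcal H_{\widetilde B}$ be the unitary defined by $U(|\psi\rangle\otimes|0\rangle)=|\psi\rangle\otimes|\mathrm{vac}\rangle$ and $U(|\psi\rangle\otimes|1\rangle)=|\mathrm{vac}\rangle\otimes|\psi\rangle$, with $\mathcal U(\cdot)=U\cdot U^\dagger$. Then there do not exist finite-dimensional systems $E$ and $F$, a state $\sigma_{EF}$ of $EF$, and unitaries $\widetilde V_{AE}=V_{AE}\oplus(|\mathrm{vac}\rangle\langle\mathrm{vac}|\otimes I_E)$ on $\mathcal H_{\widetilde A}\otimes\mathcal H_E$ and $\widetilde W_{BF}=W_{BF}\oplus(|\mathrm{vac}\rangle\langle\mathrm{vac}|\otimes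 I_F)$ on $\mathcal H_{\widetilde B}\otimes\mathcal H_F$ (with $V_{AE}$ unitary on $\mathcal H_A\otimes\mathcal H_E$ and $W_{BF}$ unitary on $\mathcal H_B\otimes\mathcal H_F$), such that for all states $\rho$ of $M$ and $\omega$ of $P$ $$\mathcal C(\rho\otimes\omega)=\mathcal U^\dagger\Big(\operatorname{Tr}_{EF}\big\{(\widetilde{\mathcal V}_{AE}\otimes\widetilde{\mathcal W}_{BF})[\mathcal U(\rho\otimes\omega)\otimes\sigma_{EF}]\big\}\Big),$$ where $\widetilde{\mathcal V}_{AE}(\cdot)=\widetilde V_{AE}\cdot\widetilde V_{AE}^\dagger$, $\widetilde{\mathcal W}_{BF}(\cdot)=\widetilde W_{BF}\cdot\widetilde W_{BF}^\dagger$ and $\mathcal U^\dagger(\cdot)=U^\dagger\cdot U$.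
   Context: $\widetilde{\mathcal V}_{AE}$ and $\widetilde{\mathcal W}_{BF}$ model the interaction of a particle with local environments $E$ and $F$ on two spatially separated paths; they act as the identity when the particle's input on that path is the vacuum. The tensor product $\widetilde{\mathcal V}_{AE}\otimes\widetilde{\mathcal W}_{BF}$ acts on $\widetilde A\otimes\widetilde B\otimes E\otimes F$ with subsystems reordered as appropriate. *)

theory Defs
  imports Complex_Main "Jordan_Normal_Form.Matrix"
begin

text \<open>Computational basis index conventions: the tensor product
H_1 (x) H_2 of dimensions n1, n2 has basis index i*n2+j for |i>|j> (Kronecker order).\<close>

definition cinner :: "complex vec \<Rightarrow> complex vec \<Rightarrow> complex" where
  "cinner v w = (\<Sum>i<dim_vec v. cnj (v $ i) * w $ i)"

definition adj :: "complex mat \<Rightarrow> complex mat" where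
  "adj A = mat (dim_col A) (dim_row A) (\<lambda>(i,j). cnj (A $$ (j,i)))"

definition tr :: "complex mat \<Rightarrow> complex" where
  "tr A = (\<Sum>i<dim_row A. A $$ (i,i))"

definition kron :: "complex mat \<Rightarrow> complex mat \<Rightarrow> complex mat" where
  "kron A B = mat (dim_row A * dim_row B) (dim_col A * dim_col B)
     (\<lambda>(i,j). A $$ (i div dim_row B, j div dim_col B) * B $$ (i mod dim_row B, j mod dim_col B))"

definition ptrace2 :: "nat \<Rightarrow> nat \<Rightarrow> complex mat \<Rightarrow> complex mat" where
  "ptrace2 n1 n2 X = mat n1 n1 (\<lambda>(i,j). \<Sum>k<n2. X $$ (i*n2+k, j*n2+k))"

definition ptrace1 :: "nat \<Rightarrow> nat \<Rightarrow> complex mat \<Rightarrow> complex mat" where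
  "ptrace1 n1 n2 X = mat n2 n2 (\<lambda>(i,j). \<Sum>k<n1. X $$ (k*n2+i, k*n2+j))"

definition positive_semidef :: "nat \<Rightarrow> complex mat \<Rightarrow> bool" where
  "positive_semidef n A \<longleftrightarrow> A \<in> carrier_mat n n \<and>
     (\<forall>v \<in> carrier_vec n. Im (cinner v (A *\<^sub>v v)) = 0 \<and> Re (cinner v (A *\<^sub>v v)) \<ge> 0)"

definition density :: "nat \<Rightarrow> complex mat \<Rightarrow> bool" where
  "density n \<rho> \<longleftrightarrow> positive_semidef n \<rho> \<and> tr \<rho> = 1"

definition unitary_mat :: "nat \<Rightarrow> complex mat \<Rightarrow> bool" where
  "unitary_mat n V \<longleftrightarrow> V \<in> carrier_mat n n \<and> adj V * V = 1\<^sub>m n \<and> V * adj V = 1\<^sub>m n"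

text \<open>Pure erasure channel on M (dim d): E_0(X) = |psi0><psi0| Tr X, and
C = E_0 (x) I_P on M (x) P with P a qubit.\<close>
definition ketbra :: "complex vec \<Rightarrow> complex mat" where
  "ketbra v = mat (dim_vec v) (dim_vec v) (\<lambda>(i,j). v $ i * cnj (v $ j))"

definition chanC :: "nat \<Rightarrow> complex vec \<Rightarrow> complex mat \<Rightarrow> complex mat" where
  "chanC d \<psi>0 X = kron (ketbra \<psi>0) (ptrace1 d 2 X)"

text \<open>Vacuum-extended system A~ = A (+) Vac of dimension d+1: indices 0..d-1 are the
A basis, index d is |vac>.  The isometry U : M (x) P -> A~ (x) B~ with
U(|j>|0>) = |j>|vac>,  U(|j>|1>) = |vac>|j>.\<close>
definition Umat :: "nat \<Rightarrow> complex mat" where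
  "Umat d = mat ((d+1)*(d+1)) (d*2) (\<lambda>(r,c).
     if (c mod 2 = 0 \<and> r = (c div 2)*(d+1) + d) \<or> (c mod 2 = 1 \<and> r = d*(d+1) + c div 2)
     then 1 else 0)"

text \<open>V~ = V (+) (|vac><vac| (x) I_E) on A~ (x) E, where A~ (x) E = (A (x) E) (+) (Vac (x) E):
with index order i*e+k the A (x) E block comes first (d*e indices) and Vac (x) E last (e indices).\<close>
definition vac_ext :: "nat \<Rightarrow> nat \<Rightarrow> complex mat \<Rightarrow> complex mat" where
  "vac_ext d e V = four_block_mat V (0\<^sub>m (d*e) e) (0\<^sub>m e (d*e)) (1\<^sub>m e)"

text \<open>Permutation matrix reordering subsystems  X1 X2 X3 X4  ->  X1 X3 X2 X4
(dims n1 n2 n3 n4): maps |i,j,k,l> to |i,k,j,l>.\<close>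
definition swap_mid :: "nat \<Rightarrow> nat \<Rightarrow> nat \<Rightarrow> nat \<Rightarrow> complex mat" where
  "swap_mid n1 n2 n3 n4 = mat (n1*n2*n3*n4) (n1*n2*n3*n4) (\<lambda>(r,c).
     let i = c div (n2*n3*n4); j = (c div (n3*n4)) mod n2; k = (c div n4) mod n3; l = c mod n4
     in if r = ((i*n3 + k)*n2 + j)*n4 + l then 1 else 0)"

text \<open>(V~_AE (x) W~_BF) acting on A~ B~ E F (subsystems reordered appropriately).\<close>
definition VW_op :: "nat \<Rightarrow> nat \<Rightarrow> nat \<Rightarrow> complex mat \<Rightarrow> complex mat \<Rightarrow> complex mat" where
  "VW_op d e f V W = (let S = swap_mid (d+1) (d+1) e f in
      adj S * kron (vac_ext d e V) (vac_ext d f W) * S)"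

end

theory Submission imports Defs begin

lemma mult_entry:
  assumes "i < dim_row A" "j < dim_col B" "dim_col A = dim_row B"
  shows "(A * B) $$ (i,j) = (\<Sum>k<dim_row B. A $$ (i,k) * B $$ (k,j))"
  using assms by (auto simp: scalar_prod_def lessThan_atLeast0 intro!: sum.cong)

lemma adj_entry[simp]:
  "i < dim_col A \<Longrightarrow> j < dim_row A \<Longrightarrow> adj A $$ (i,j) = cnj (A $$ (j,i))"
  "dim_row (adj A) = dim_col A" "dim_col (adj A) = dim_row A"
  by (auto simp: adj_def)

lemma sum_add_split:
  fixes g :: "nat \<Rightarrow> 'a::comm_monoid_add"
  shows "(\<Sum>p<a+b. g p) = (\<Sum>p<a. g p) + (\<Sum>q<b. g (a+q))"
  by (induction b) (simp_all add: add.assoc)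

lemma sum_prod_split:
  fixes g :: "nat \<Rightarrow> 'a::comm_monoid_add"
  shows "(\<Sum>p<m*n. g p) = (\<Sum>a<m. \<Sum>b<n. g (a*n+b))"
proof (induction m)
  case 0 then show ?case by simp
next
  case (Suc m)
  have "(\<Sum>p<Suc m*n. g p) = (\<Sum>p<m*n+n. g p)" by (simp add: add.commute)
  also have "\<dots> = (\<Sum>p<m*n. g p) + (\<Sum>b<n. g (m*n+b))" by (rule sum_add_split)
  finally show ?case using Suc by simp
qed


lemma sum_delta_mult:
  fixes f :: "nat \<Rightarrow> complex"
  shows "(\<Sum>t<n. f t * (if t = a then 1 else 0)) = (if a < n then f a else 0)"
proof -
  have "(\<Sum>t<n. f t * (if t = a then 1 else 0)) = (\<Sum>t<n. if t = a then f t else 0)"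
    by (rule sum.cong) auto
  then show ?thesis by simp
qed

lemma sum_delta_mult':
  fixes f :: "nat \<Rightarrow> complex"
  shows "(\<Sum>t<n. (if t = a then 1 else 0) * f t) = (if a < n then f a else 0)"
proof -
  have "(\<Sum>t<n. (if t = a then 1 else 0) * f t) = (\<Sum>t<n. if t = a then f t else 0)"
    by (rule sum.cong) auto
  then show ?thesis by simp
qed

lemma perm_conj_entry:
  assumes S: "S \<in> carrier_mat n m" and Z: "Z \<in> carrier_mat n n"
    and pi: "\<And>c. c < m \<Longrightarrow> \<pi> c < n"
    and Se: "\<And>r c. r < n \<Longrightarrow> c < m \<Longrightarrow> S $$ (r,c) = (if r = \<pi> c then 1 else 0)"
    and x: "x < m" and p: "p < m"
  shows "(adj S * Z * S) $$ (x,p) = Z $$ (\<pi> x, \<pi> p)"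
proof -
  have d1: "adj S * Z \<in> carrier_mat m n" using S Z by auto
  have "(adj S * Z * S) $$ (x,p) = (\<Sum>t<n. (adj S * Z) $$ (x,t) * S $$ (t,p))"
    using S Z x p by (subst mult_entry) auto
  also have "\<dots> = (\<Sum>t<n. (adj S * Z) $$ (x,t) * (if t = \<pi> p then 1 else 0))"
    using Se p by (intro sum.cong) auto
  also have "\<dots> = (adj S * Z) $$ (x, \<pi> p)" using pi p by (simp add: sum_delta_mult)
  also have "\<dots> = (\<Sum>s<n. cnj (S $$ (s,x)) * Z $$ (s, \<pi> p))"
    using S Z x p pi by (subst mult_entry) auto
  also have "\<dots> = (\<Sum>s<n. (if s = \<pi> x then 1 else 0) * Z $$ (s, \<pi> p))"
    using Se x by (intro sum.cong) auto
  also have "\<dots> = Z $$ (\<pi> x, \<pi> p)" using pi x by (simp add: sum_delta_mult')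
  finally show ?thesis .
qed

lemma conj_entry:
  assumes T: "T \<in> carrier_mat m n" and M: "M \<in> carrier_mat n n"
    and x: "x < m" and y: "y < m"
  shows "(T * M * adj T) $$ (x,y) = (\<Sum>p<n. T $$ (x,p) * (\<Sum>q<n. M $$ (p,q) * cnj (T $$ (y,q))))"
proof -
  have "(T * M * adj T) $$ (x,y) = (\<Sum>q<n. (T * M) $$ (x,q) * cnj (T $$ (y,q)))"
    using T M x y by (subst mult_entry) auto
  also have "\<dots> = (\<Sum>q<n. (\<Sum>p<n. T $$ (x,p) * M $$ (p,q)) * cnj (T $$ (y,q)))"
    using T M x y by (intro sum.cong refl, subst mult_entry) auto
  also have "\<dots> = (\<Sum>p<n. T $$ (x,p) * (\<Sum>q<n. M $$ (p,q) * cnj (T $$ (y,q))))"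
  proof -
    have "(\<Sum>q<n. (\<Sum>p<n. T $$ (x,p) * M $$ (p,q)) * cnj (T $$ (y,q)))
        = (\<Sum>q<n. \<Sum>p<n. T $$ (x,p) * (M $$ (p,q) * cnj (T $$ (y,q))))"
      by (simp add: sum_distrib_right mult.assoc)
    also have "\<dots> = (\<Sum>p<n. \<Sum>q<n. T $$ (x,p) * (M $$ (p,q) * cnj (T $$ (y,q))))"
      by (rule sum.swap)
    also have "\<dots> = (\<Sum>p<n. T $$ (x,p) * (\<Sum>q<n. M $$ (p,q) * cnj (T $$ (y,q))))"
      by (simp add: sum_distrib_left)
    finally show ?thesis .
  qed
  finally show ?thesis .
qed

definition Rf :: "nat \<Rightarrow> nat \<Rightarrow> nat" where
  "Rf d c = (if c mod 2 = 0 then (c div 2)*(d+1)+d else d*(d+1) + c div 2)"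

lemma Rf_bound: "c < d*2 \<Longrightarrow> Rf d c < (d+1)*(d+1)"
proof -
  assume c: "c < d*2"
  then have h: "c div 2 < d" by auto
  have "(c div 2)*(d+1) + d < (c div 2 + 1)*(d+1)" by simp
  also have "\<dots> \<le> d*(d+1)" using h by (intro mult_le_mono1) simp
  finally have "(c div 2)*(d+1) + d < d*(d+1) + (d+1)" by simp
  moreover have "d*(d+1) + c div 2 < d*(d+1) + (d+1)" using h by simp
  ultimately show ?thesis unfolding Rf_def by (auto simp: algebra_simps)
qed

lemma Umat_carrier: "Umat d \<in> carrier_mat ((d+1)*(d+1)) (d*2)"
  by (simp add: Umat_def)

lemma Umat_entry: "r < (d+1)*(d+1) \<Longrightarrow> c < d*2 \<Longrightarrow> Umat d $$ (r,c) = (if r = Rf d c then 1 else 0)"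
  unfolding Umat_def Rf_def by (auto split: if_splits)


lemma div_lem: "r < (N::nat) \<Longrightarrow> (a*N+r) div N = a"
  by simp

lemma mod_lem: "r < (N::nat) \<Longrightarrow> (a*N+r) mod N = r"
  by simp

definition fl :: "nat \<Rightarrow> nat \<Rightarrow> nat \<Rightarrow> nat \<Rightarrow> nat \<Rightarrow> nat \<Rightarrow> nat \<Rightarrow> nat" where
  "fl d e f a b k l = (a*(d+1)+b)*(e*f) + (k*f+l)"

definition pis :: "nat \<Rightarrow> nat \<Rightarrow> nat \<Rightarrow> nat \<Rightarrow> nat" where
  "pis d e f c = (let i = c div ((d+1)*e*f); j = (c div (e*f)) mod (d+1); k = (c div f) mod e; l = c mod f
     in ((i*e + k)*(d+1) + j)*f + l)"

lemma kf_bound: "k < e \<Longrightarrow> l < f \<Longrightarrow> k*f+l < e*(f::nat)"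
proof -
  assume "k < e" "l < f"
  then have "k*f + l < k*f + f" by simp
  also have "\<dots> = (k+1)*f" by simp
  also have "\<dots> \<le> e*f" using \<open>k<e\<close> by (intro mult_le_mono1) simp
  finally show ?thesis .
qed

lemma fl_bound: "a \<le> d \<Longrightarrow> b \<le> d \<Longrightarrow> k < e \<Longrightarrow> l < f \<Longrightarrow> fl d e f a b k l < (d+1)*(d+1)*(e*f)"
proof -
  assume h: "a \<le> d" "b \<le> d" "k < e" "l < f"
  have "a*(d+1)+b < (d+1)*(d+1)" using kf_bound[of a "d+1" b "d+1"] h by (simp add: mult.commute)
  then have "fl d e f a b k l < ((a*(d+1)+b)+1)*(e*f)" unfolding fl_def using kf_bound[OF h(3,4)] by simp
  also have "\<dots> \<le> (d+1)*(d+1)*(e*f)" using \<open>a*(d+1)+b < (d+1)*(d+1)\<close> by (intro mult_le_mono1) simp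
  finally show ?thesis .
qed

lemma fl_div: "k < e \<Longrightarrow> l < f \<Longrightarrow> fl d e f a b k l div (e*f) = a*(d+1)+b"
  unfolding fl_def using kf_bound[of k e l f] by simp

lemma fl_mod: "k < e \<Longrightarrow> l < f \<Longrightarrow> fl d e f a b k l mod (e*f) = k*f+l"
  unfolding fl_def using kf_bound[of k e l f] by simp

lemma pis_fl:
  assumes "a \<le> d" "b \<le> d" "k < e" "l < f"
  shows "pis d e f (fl d e f a b k l) = (a*e+k)*((d+1)*f) + (b*f+l)"
proof -
  let ?c = "fl d e f a b k l"
  have c0: "?c = ((a*(d+1)+b)*e + k)*f + l" unfolding fl_def by (simp add: algebra_simps)
  have c1: "?c div f = (a*(d+1)+b)*e + k" unfolding c0 using assms by simp
  have c2: "?c mod f = l" unfolding c0 using assms by simp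
  have c3: "?c div (e*f) = a*(d+1)+b" using fl_div assms by blast
  have e0: "e > 0" "f > 0" using assms by auto
  have c4: "?c div ((d+1)*e*f) = a"
  proof -
    have r1: "b*e+k < (d+1)*e" using kf_bound[of b "d+1" k e] assms by simp
    have r2: "(b*e+k)*f+l < (d+1)*e*f" using kf_bound[OF r1 assms(4)] by simp
    have "?c = a*((d+1)*e*f) + ((b*e+k)*f+l)" by (simp add: fl_def algebra_simps)
    then show ?thesis using div_lem[OF r2, of a] by (simp only:)
  qed
  have c5: "(a*(d+1)+b) mod (d+1) = b" using mod_lem[of b "d+1" a] assms by linarith
  have c6: "((a*(d+1)+b)*e + k) mod e = k" using mod_lem[of k e "a*(d+1)+b"] assms by linarith
  have "pis d e f ?c = ((a*e + k)*(d+1) + b)*f + l"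
    unfolding pis_def Let_def c1 c2 c3 c4 c5 c6 by simp
  also have "\<dots> = (a*e+k)*((d+1)*f) + (b*f+l)" by (simp add: algebra_simps)
  finally show ?thesis .
qed

lemma swap_mid_carrier: "swap_mid n1 n2 n3 n4 \<in> carrier_mat (n1*n2*n3*n4) (n1*n2*n3*n4)"
  by (simp add: swap_mid_def)

lemma pis_bound:
  assumes "c < (d+1)*(d+1)*e*f"
  shows "pis d e f c < (d+1)*(d+1)*e*f"
proof -
  have e0: "e > 0" "f > 0" using assms by (auto intro!: gr0I)
  define a where "a = c div ((d+1)*e*f)"
  define b where "b = (c div (e*f)) mod (d+1)"
  define k where "k = (c div f) mod e"
  define l where "l = c mod f"
  have "c < (d+1)*((d+1)*e*f)" using assms by (simp only: mult.assoc)
  then have a: "a < d+1" unfolding a_def by (rule less_mult_imp_div_less)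
  have kl: "k < e" "l < f" "b < d+1" using e0 by (auto simp: k_def l_def b_def)
  have "pis d e f c = ((a*e + k)*(d+1) + b)*f + l" unfolding pis_def Let_def a_def b_def k_def l_def by simp
  also have "\<dots> < (((a*e + k)*(d+1) + b)+1)*f" using kl by simp
  also have "\<dots> \<le> ((a*e+k)*(d+1) + (d+1))*f" using kl by (intro mult_le_mono1) simp
  also have "\<dots> = ((a*e+k+1)*(d+1))*f" by (simp add: algebra_simps)
  also have "\<dots> \<le> ((a*e+e)*(d+1))*f" using kl by (intro mult_le_mono1) simp
  also have "\<dots> = ((a+1)*e*(d+1))*f" by (simp add: algebra_simps)
  also have "\<dots> \<le> ((d+1)*e*(d+1))*f" using a by (intro mult_le_mono1) simp
  also have "\<dots> = (d+1)*(d+1)*e*f" by (simp add: algebra_simps)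
  finally show ?thesis .
qed

lemma swap_mid_entry:
  "r < (d+1)*(d+1)*e*f \<Longrightarrow> c < (d+1)*(d+1)*e*f \<Longrightarrow>
   swap_mid (d+1) (d+1) e f $$ (r,c) = (if r = pis d e f c then 1 else 0)"
  unfolding swap_mid_def pis_def by (simp add: Let_def mult.assoc)


definition vt :: "nat \<Rightarrow> nat \<Rightarrow> complex mat \<Rightarrow> nat \<Rightarrow> nat \<Rightarrow> nat \<Rightarrow> nat \<Rightarrow> complex" where
  "vt d e V a k a' k' = (if a < d \<and> a' < d then V $$ (a*e+k, a'*e+k')
      else if a = d \<and> a' = d then (if k = k' then 1 else 0) else 0)"

lemma vac_ext_carrier: "V \<in> carrier_mat (d*e) (d*e) \<Longrightarrow> vac_ext d e V \<in> carrier_mat ((d+1)*e) ((d+1)*e)"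
  unfolding vac_ext_def by (auto simp: algebra_simps)

lemma ak_less: "a < d \<Longrightarrow> k < e \<Longrightarrow> a*e+k < d*(e::nat)"
  using kf_bound[of a d k e] by (simp add: mult.commute)

lemma vac_ext_entry:
  assumes V: "V \<in> carrier_mat (d*e) (d*e)" and h: "a \<le> d" "a' \<le> d" "k < e" "k' < e"
  shows "vac_ext d e V $$ (a*e+k, a'*e+k') = vt d e V a k a' k'"
proof -
  have b1: "a*e+k < d*e + e" "a'*e+k' < d*e+e" using ak_less[of a "d+1" k e] ak_less[of a' "d+1" k' e] h
    by (simp_all add: algebra_simps)
  have "a < d \<or> a = d" "a' < d \<or> a' = d" using h by auto
  then show ?thesis
  proof (elim disjE)
    assume "a < d" "a' < d" then show ?thesis using V b1 ak_less[of a d k e] ak_less[of a' d k' e] h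
      unfolding vac_ext_def vt_def by simp
  next
    assume "a < d" "a' = d" then show ?thesis using V b1 ak_less[of a d k e] h
      unfolding vac_ext_def vt_def by simp
  next
    assume "a = d" "a' < d" then show ?thesis using V b1 ak_less[of a' d k' e] h
      unfolding vac_ext_def vt_def by simp
  next
    assume "a = d" "a' = d" then show ?thesis using V b1 h
      unfolding vac_ext_def vt_def by simp
  qed
qed

lemma kron_entry:
  "i < dim_row A * dim_row B \<Longrightarrow> j < dim_col A * dim_col B \<Longrightarrow>
   kron A B $$ (i,j) = A $$ (i div dim_row B, j div dim_col B) * B $$ (i mod dim_row B, j mod dim_col B)"
  "dim_row (kron A B) = dim_row A * dim_row B" "dim_col (kron A B) = dim_col A * dim_col B"
  unfolding kron_def by auto

lemma T_entry:
  assumes V: "V \<in> carrier_mat (d*e) (d*e)" and W: "W \<in> carrier_mat (d*f) (d*f)"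
    and h: "a \<le> d" "b \<le> d" "k < e" "l < f" "a' \<le> d" "b' \<le> d" "k' < e" "l' < f"
  shows "VW_op d e f V W $$ (fl d e f a b k l, fl d e f a' b' k' l') = vt d e V a k a' k' * vt d f W b l b' l'"
proof -
  let ?n = "(d+1)*(d+1)*e*f"
  let ?K = "kron (vac_ext d e V) (vac_ext d f W)"
  have Kc: "?K \<in> carrier_mat ?n ?n" using vac_ext_carrier[OF V] vac_ext_carrier[OF W]
    by (auto simp: kron_entry algebra_simps)
  have flb: "fl d e f a b k l < ?n" "fl d e f a' b' k' l' < ?n" using fl_bound[OF h(1-4)] fl_bound[OF h(5-8)] by (simp_all only: mult.assoc)
  have "VW_op d e f V W $$ (fl d e f a b k l, fl d e f a' b' k' l') = ?K $$ (pis d e f (fl d e f a b k l), pis d e f (fl d e f a' b' k' l'))"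
    unfolding VW_op_def Let_def
    by (rule perm_conj_entry[OF swap_mid_carrier Kc pis_bound swap_mid_entry flb])
  also have "\<dots> = ?K $$ ((a*e+k)*((d+1)*f) + (b*f+l), (a'*e+k')*((d+1)*f) + (b'*f+l'))"
    using pis_fl h by simp
  also have "\<dots> = vac_ext d e V $$ (a*e+k, a'*e+k') * vac_ext d f W $$ (b*f+l, b'*f+l')"
  proof -
    have r: "dim_row (vac_ext d f W) = (d+1)*f" "dim_col (vac_ext d f W) = (d+1)*f"
      "dim_row (vac_ext d e V) = (d+1)*e" "dim_col (vac_ext d e V) = (d+1)*e"
      using vac_ext_carrier[OF V] vac_ext_carrier[OF W] by auto
    have i1: "a*e+k < (d+1)*e" "a'*e+k' < (d+1)*e" using ak_less[of a "d+1" k e] ak_less[of a' "d+1" k' e] h by auto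
    have i2: "b*f+l < (d+1)*f" "b'*f+l' < (d+1)*f" using ak_less[of b "d+1" l f] ak_less[of b' "d+1" l' f] h by auto
    have i3: "(a*e+k)*((d+1)*f) + (b*f+l) < (d+1)*e*((d+1)*f)"
      "(a'*e+k')*((d+1)*f) + (b'*f+l') < (d+1)*e*((d+1)*f)"
      using kf_bound[OF i1(1) i2(1)] kf_bound[OF i1(2) i2(2)] by auto
    show ?thesis apply (subst kron_entry(1)) using i3 i2 r by (auto simp: div_lem)
  qed
  also have "\<dots> = vt d e V a k a' k' * vt d f W b l b' l'"
    using vac_ext_entry[OF V] vac_ext_entry[OF W] h by simp
  finally show ?thesis .
qed


lemma sum_fl:
  fixes g :: "nat \<Rightarrow> 'a::comm_monoid_add"
  shows "(\<Sum>p<(d+1)*(d+1)*e*f. g p) = (\<Sum>a<d+1. \<Sum>b<d+1. \<Sum>k<e. \<Sum>l<f. g (fl d e f a b k l))"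
proof -
  have "(\<Sum>p<(d+1)*(d+1)*e*f. g p) = (\<Sum>p<((d+1)*(d+1))*(e*f). g p)" by (simp only: mult.assoc)
  also have "\<dots> = (\<Sum>s<(d+1)*(d+1). \<Sum>m<e*f. g (s*(e*f)+m))" by (rule sum_prod_split)
  also have "\<dots> = (\<Sum>a<d+1. \<Sum>b<d+1. \<Sum>m<e*f. g ((a*(d+1)+b)*(e*f)+m))" by (rule sum_prod_split)
  also have "\<dots> = (\<Sum>a<d+1. \<Sum>b<d+1. \<Sum>k<e. \<Sum>l<f. g ((a*(d+1)+b)*(e*f)+(k*f+l)))"
    by (subst sum_prod_split) (rule refl)
  finally show ?thesis unfolding fl_def .
qed

lemma R1:
  fixes h :: "nat \<Rightarrow> complex"
  assumes V: "V \<in> carrier_mat (d*e) (d*e)" and W: "W \<in> carrier_mat (d*f) (d*f)"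
    and i: "i < d" and k: "k < e" and l: "l < f"
  shows "(\<Sum>p<(d+1)*(d+1)*e*f. VW_op d e f V W $$ (fl d e f i d k l, p) * h p)
       = (\<Sum>a<d. \<Sum>k'<e. V $$ (i*e+k, a*e+k') * h (fl d e f a d k' l))"
proof -
  have "(\<Sum>p<(d+1)*(d+1)*e*f. VW_op d e f V W $$ (fl d e f i d k l, p) * h p)
     = (\<Sum>a<d+1. \<Sum>b<d+1. \<Sum>k'<e. \<Sum>l'<f. VW_op d e f V W $$ (fl d e f i d k l, fl d e f a b k' l') * h (fl d e f a b k' l'))"
    by (rule sum_fl)
  also have "\<dots> = (\<Sum>a<d+1. \<Sum>b<d+1. \<Sum>k'<e. \<Sum>l'<f. (if b = d then (if l' = l then 1 else 0) else 0) * (vt d e V i k a k' * h (fl d e f a b k' l')))"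
    using i k l by (intro sum.cong refl) (simp add: T_entry[OF V W] vt_def)
  also have "\<dots> = (\<Sum>a<d+1. \<Sum>b<d+1. (if b = d then (\<Sum>k'<e. vt d e V i k a k' * h (fl d e f a d k' l)) else 0))"
    using l by (intro sum.cong refl) (simp add: sum_delta_mult')
  also have "\<dots> = (\<Sum>a<d+1. \<Sum>k'<e. vt d e V i k a k' * h (fl d e f a d k' l))"
    by simp
  also have "\<dots> = (\<Sum>a<d. \<Sum>k'<e. V $$ (i*e+k, a*e+k') * h (fl d e f a d k' l))"
    using i by (simp add: vt_def)
  finally show ?thesis .
qed

lemma R2:
  fixes h :: "nat \<Rightarrow> complex"
  assumes V: "V \<in> carrier_mat (d*e) (d*e)" and W: "W \<in> carrier_mat (d*f) (d*f)"
    and j: "j < d" and k: "k < e" and l: "l < f"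
  shows "(\<Sum>q<(d+1)*(d+1)*e*f. h q * cnj (VW_op d e f V W $$ (fl d e f d j k l, q)))
       = (\<Sum>b<d. \<Sum>l'<f. h (fl d e f d b k l') * cnj (W $$ (j*f+l, b*f+l')))"
proof -
  have "(\<Sum>q<(d+1)*(d+1)*e*f. h q * cnj (VW_op d e f V W $$ (fl d e f d j k l, q)))
     = (\<Sum>a<d+1. \<Sum>b<d+1. \<Sum>k'<e. \<Sum>l'<f. h (fl d e f a b k' l') * cnj (VW_op d e f V W $$ (fl d e f d j k l, fl d e f a b k' l')))"
    by (rule sum_fl)
  also have "\<dots> = (\<Sum>a<d+1. \<Sum>b<d+1. \<Sum>k'<e. \<Sum>l'<f. (if a = d then (if k' = k then 1 else 0) else 0) * (h (fl d e f a b k' l') * cnj (vt d f W j l b l')))"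
    using j k l by (intro sum.cong refl) (simp add: T_entry[OF V W] vt_def)
  also have "\<dots> = (\<Sum>a<d+1. (if a = d then (\<Sum>b<d+1. \<Sum>l'<f. h (fl d e f d b k l') * cnj (vt d f W j l b l')) else 0))"
  proof (intro sum.cong refl)
    fix a assume "a \<in> {..<d+1}"
    show "(\<Sum>b<d+1. \<Sum>k'<e. \<Sum>l'<f. (if a = d then (if k' = k then 1 else 0) else 0) * (h (fl d e f a b k' l') * cnj (vt d f W j l b l')))
      = (if a = d then (\<Sum>b<d+1. \<Sum>l'<f. h (fl d e f d b k l') * cnj (vt d f W j l b l')) else 0)"
    proof (cases "a = d")
      case True
      then show ?thesis using k by (simp add: sum_distrib_left[symmetric] sum.swap[of _ "{..<e}"] sum_delta_mult')
    qed simp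
  qed
  also have "\<dots> = (\<Sum>b<d+1. \<Sum>l'<f. h (fl d e f d b k l') * cnj (vt d f W j l b l'))"
    by simp
  also have "\<dots> = (\<Sum>b<d. \<Sum>l'<f. h (fl d e f d b k l') * cnj (W $$ (j*f+l, b*f+l')))"
    using j by (simp add: vt_def)
  finally show ?thesis .
qed


lemma Rf_eq1: "c < d*2 \<Longrightarrow> a < d \<Longrightarrow> (a*(d+1)+d = Rf d c) = (c = 2*a)"
proof -
  assume c: "c < d*2" and a: "a < d"
  have h: "c div 2 < d" using c by auto
  have lt: "a*(d+1)+d < d*(d+1)"
  proof -
    have "a*(d+1)+d < a*(d+1)+(d+1)" by simp
    also have "\<dots> = (a+1)*(d+1)" by simp
    also have "\<dots> \<le> d*(d+1)" using a by (intro mult_le_mono1) simp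
    finally show ?thesis .
  qed
  show ?thesis
  proof (cases "c mod 2 = 0")
    case True
    have "(a*(d+1)+d = (c div 2)*(d+1)+d) = (a = c div 2)" by (simp only: add_right_cancel mult_cancel2) simp
    then show ?thesis using True div_mult_mod_eq[of c 2] unfolding Rf_def by auto
  next
    case False
    then show ?thesis unfolding Rf_def using lt by auto
  qed
qed

lemma Rf_eq2: "c < d*2 \<Longrightarrow> b < d \<Longrightarrow> (d*(d+1)+b = Rf d c) = (c = 2*b+1)"
proof -
  assume c: "c < d*2" and b: "b < d"
  have h: "c div 2 < d" using c by auto
  have lt: "(c div 2)*(d+1)+d < d*(d+1)"
  proof -
    have "(c div 2)*(d+1)+d < (c div 2)*(d+1)+(d+1)" by simp
    also have "\<dots> = (c div 2+1)*(d+1)" by simp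
    also have "\<dots> \<le> d*(d+1)" using h by (intro mult_le_mono1) simp
    finally show ?thesis .
  qed
  show ?thesis
  proof (cases "c mod 2 = 0")
    case True
    then show ?thesis unfolding Rf_def using lt by auto
  next
    case False
    then show ?thesis using div_mult_mod_eq[of c 2] unfolding Rf_def by auto
  qed
qed

lemma N_entry:
  assumes rho: "\<rho> \<in> carrier_mat d d" and om: "\<omega> \<in> carrier_mat 2 2" and a: "a < d" and b: "b < d"
  shows "(Umat d * kron \<rho> \<omega> * adj (Umat d)) $$ (a*(d+1)+d, d*(d+1)+b) = \<rho> $$ (a,b) * \<omega> $$ (0,1)"
proof -
  have Q: "kron \<rho> \<omega> \<in> carrier_mat (d*2) (d*2)" using rho om by (simp add: kron_def)
  have s1: "a*(d+1)+d < (d+1)*(d+1)" "d*(d+1)+b < (d+1)*(d+1)"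
    using Rf_bound[of "2*a" d] Rf_bound[of "2*b+1" d] a b by (auto simp: Rf_def)
  have "(Umat d * kron \<rho> \<omega> * adj (Umat d)) $$ (a*(d+1)+d, d*(d+1)+b)
     = (\<Sum>c<d*2. Umat d $$ (a*(d+1)+d, c) * (\<Sum>c'<d*2. kron \<rho> \<omega> $$ (c,c') * cnj (Umat d $$ (d*(d+1)+b, c'))))"
    by (rule conj_entry[OF Umat_carrier Q s1])
  also have "\<dots> = (\<Sum>c<d*2. (if c = 2*a then 1 else 0) * (\<Sum>c'<d*2. kron \<rho> \<omega> $$ (c,c') * (if c' = 2*b+1 then 1 else 0)))"
  proof -
    have u1: "Umat d $$ (a*(d+1)+d, c) = (if c = 2*a then 1 else 0)" if c: "c < d*2" for c
      using Umat_entry[OF s1(1) c] Rf_eq1[OF c a] by presburger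
    have u2: "cnj (Umat d $$ (d*(d+1)+b, c)) = (if c = 2*b+1 then 1 else 0)" if c: "c < d*2" for c
      using Umat_entry[OF s1(2) c] Rf_eq2[OF c b] by (simp only:) simp
    show ?thesis
    proof (intro sum.cong refl)
      fix c assume c: "c \<in> {..<d*2}"
      have "(\<Sum>c'<d*2. kron \<rho> \<omega> $$ (c,c') * cnj (Umat d $$ (d*(d+1)+b, c')))
          = (\<Sum>c'<d*2. kron \<rho> \<omega> $$ (c,c') * (if c' = 2*b+1 then 1 else 0))"
        by (intro sum.cong refl) (simp only: lessThan_iff u2)
      then show "Umat d $$ (a*(d+1)+d, c) * (\<Sum>c'<d*2. kron \<rho> \<omega> $$ (c,c') * cnj (Umat d $$ (d*(d+1)+b, c')))
          = (if c = 2*a then 1 else 0) * (\<Sum>c'<d*2. kron \<rho> \<omega> $$ (c,c') * (if c' = 2*b+1 then 1 else 0))"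
        using u1 c by simp
    qed
  qed
  also have "\<dots> = kron \<rho> \<omega> $$ (2*a, 2*b+1)"
    using a b by (simp add: sum_delta_mult sum_delta_mult')
  also have "\<dots> = \<rho> $$ (a,b) * \<omega> $$ (0,1)"
    using rho om a b by (subst kron_entry) auto
  finally show ?thesis .
qed

lemma M_entry:
  assumes N: "N \<in> carrier_mat ((d+1)*(d+1)) ((d+1)*(d+1))" and sig: "\<sigma> \<in> carrier_mat (e*f) (e*f)"
    and h: "a \<le> d" "b \<le> d" "k < e" "l < f" "a' \<le> d" "b' \<le> d" "k' < e" "l' < f"
  shows "kron N \<sigma> $$ (fl d e f a b k l, fl d e f a' b' k' l') = N $$ (a*(d+1)+b, a'*(d+1)+b') * \<sigma> $$ (k*f+l, k'*f+l')"
proof -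
  have flb: "fl d e f a b k l < (d+1)*(d+1)*(e*f)" "fl d e f a' b' k' l' < (d+1)*(d+1)*(e*f)"
    using fl_bound[OF h(1-4)] fl_bound[OF h(5-8)] by auto
  show ?thesis using N sig flb by (subst kron_entry) (auto simp: fl_div fl_mod h)
qed

lemma VW_carrier: "VW_op d e f V W \<in> carrier_mat ((d+1)*(d+1)*e*f) ((d+1)*(d+1)*e*f)"
  unfolding VW_op_def Let_def using swap_mid_carrier[of "d+1" "d+1" e f] by auto


lemma Y_entry:
  assumes V: "V \<in> carrier_mat (d*e) (d*e)" and W: "W \<in> carrier_mat (d*f) (d*f)"
    and sig: "\<sigma> \<in> carrier_mat (e*f) (e*f)" and rho: "\<rho> \<in> carrier_mat d d" and om: "\<omega> \<in> carrier_mat 2 2"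
    and i: "i < d" and j: "j < d" and k: "k < e" and l: "l < f"
  shows "(VW_op d e f V W * kron (Umat d * kron \<rho> \<omega> * adj (Umat d)) \<sigma> * adj (VW_op d e f V W)) $$ (fl d e f i d k l, fl d e f d j k l)
    = (\<Sum>a<d. \<Sum>k'<e. V $$ (i*e+k, a*e+k') * (\<Sum>b<d. \<Sum>l'<f. (\<rho> $$ (a,b) * \<omega> $$ (0,1) * \<sigma> $$ (k'*f+l, k*f+l')) * cnj (W $$ (j*f+l, b*f+l'))))"
proof -
  let ?n = "(d+1)*(d+1)*e*f"
  let ?N = "Umat d * kron \<rho> \<omega> * adj (Umat d)"
  let ?M = "kron ?N \<sigma>"
  let ?T = "VW_op d e f V W"
  have Nc: "?N \<in> carrier_mat ((d+1)*(d+1)) ((d+1)*(d+1))" using Umat_carrier[of d] by auto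
  have Mc: "?M \<in> carrier_mat ?n ?n"
  proof (rule carrier_matI)
    have "dim_row ?M = dim_row ?N * dim_row \<sigma>" by (rule kron_entry(2))
    also have "\<dots> = (d+1)*(d+1)*(e*f)" using Nc sig by (simp only: carrier_matD)
    also have "\<dots> = ?n" by (simp only: mult.assoc)
    finally show "dim_row ?M = ?n" .
    have "dim_col ?M = dim_col ?N * dim_col \<sigma>" by (rule kron_entry(3))
    also have "\<dots> = (d+1)*(d+1)*(e*f)" using Nc sig by (simp only: carrier_matD)
    also have "\<dots> = ?n" by (simp only: mult.assoc)
    finally show "dim_col ?M = ?n" .
  qed
  have xb: "fl d e f i d k l < ?n" "fl d e f d j k l < ?n" using fl_bound[of i d d k e l f] fl_bound[of d d j k e l f] i j k l
    by (simp_all only: mult.assoc)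
  have "(?T * ?M * adj ?T) $$ (fl d e f i d k l, fl d e f d j k l)
     = (\<Sum>p<?n. ?T $$ (fl d e f i d k l, p) * (\<Sum>q<?n. ?M $$ (p,q) * cnj (?T $$ (fl d e f d j k l, q))))"
    by (rule conj_entry[OF VW_carrier Mc xb])
  also have "\<dots> = (\<Sum>a<d. \<Sum>k'<e. V $$ (i*e+k, a*e+k') * (\<Sum>q<?n. ?M $$ (fl d e f a d k' l, q) * cnj (?T $$ (fl d e f d j k l, q))))"
    by (rule R1[OF V W i k l])
  also have "\<dots> = (\<Sum>a<d. \<Sum>k'<e. V $$ (i*e+k, a*e+k') * (\<Sum>b<d. \<Sum>l'<f. ?M $$ (fl d e f a d k' l, fl d e f d b k l') * cnj (W $$ (j*f+l, b*f+l'))))"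
    by (simp only: R2[OF V W j k l])
  also have "\<dots> = (\<Sum>a<d. \<Sum>k'<e. V $$ (i*e+k, a*e+k') * (\<Sum>b<d. \<Sum>l'<f. (\<rho> $$ (a,b) * \<omega> $$ (0,1) * \<sigma> $$ (k'*f+l, k*f+l')) * cnj (W $$ (j*f+l, b*f+l'))))"
    using k l by (intro sum.cong refl) (simp add: M_entry[OF Nc sig] N_entry[OF rho om, simplified])
  finally show ?thesis .
qed

lemma RHS_entry:
  assumes V: "V \<in> carrier_mat (d*e) (d*e)" and W: "W \<in> carrier_mat (d*f) (d*f)"
    and sig: "\<sigma> \<in> carrier_mat (e*f) (e*f)" and rho: "\<rho> \<in> carrier_mat d d" and om: "\<omega> \<in> carrier_mat 2 2"
    and i: "i < d" and j: "j < d"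
  shows "(adj (Umat d) * ptrace2 ((d+1)*(d+1)) (e*f)
                   (let T = VW_op d e f V W in
                      T * kron (Umat d * kron \<rho> \<omega> * adj (Umat d)) \<sigma> * adj T)
               * Umat d) $$ (2*i, 2*j+1)
    = (\<Sum>k<e. \<Sum>l<f. \<Sum>a<d. \<Sum>k'<e. V $$ (i*e+k, a*e+k') * (\<Sum>b<d. \<Sum>l'<f. (\<rho> $$ (a,b) * \<omega> $$ (0,1) * \<sigma> $$ (k'*f+l, k*f+l')) * cnj (W $$ (j*f+l, b*f+l'))))"
proof -
  let ?Y = "VW_op d e f V W * kron (Umat d * kron \<rho> \<omega> * adj (Umat d)) \<sigma> * adj (VW_op d e f V W)"
  let ?Z = "ptrace2 ((d+1)*(d+1)) (e*f) ?Y"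
  have Zc: "?Z \<in> carrier_mat ((d+1)*(d+1)) ((d+1)*(d+1))" by (simp add: ptrace2_def)
  have ib: "2*i < d*2" "2*j+1 < d*2" using i j by auto
  have r1: "Rf d (2*i) = i*(d+1)+d" "Rf d (2*j+1) = d*(d+1)+j" by (simp_all add: Rf_def)
  have s1: "i*(d+1)+d < (d+1)*(d+1)" "d*(d+1)+j < (d+1)*(d+1)"
    using Rf_bound[OF ib(1)] Rf_bound[OF ib(2)] r1 by auto
  have "(adj (Umat d) * ?Z * Umat d) $$ (2*i, 2*j+1) = ?Z $$ (Rf d (2*i), Rf d (2*j+1))"
    by (rule perm_conj_entry[OF Umat_carrier Zc Rf_bound Umat_entry ib])
  also have "\<dots> = (\<Sum>m<e*f. ?Y $$ ((i*(d+1)+d)*(e*f)+m, (d*(d+1)+j)*(e*f)+m))"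
    unfolding r1 ptrace2_def using s1 by simp
  also have "\<dots> = (\<Sum>k<e. \<Sum>l<f. ?Y $$ (fl d e f i d k l, fl d e f d j k l))"
    unfolding fl_def by (rule sum_prod_split)
  also have "\<dots> = (\<Sum>k<e. \<Sum>l<f. \<Sum>a<d. \<Sum>k'<e. V $$ (i*e+k, a*e+k') * (\<Sum>b<d. \<Sum>l'<f. (\<rho> $$ (a,b) * \<omega> $$ (0,1) * \<sigma> $$ (k'*f+l, k*f+l')) * cnj (W $$ (j*f+l, b*f+l'))))"
    by (intro sum.cong refl, rule Y_entry[OF V W sig rho om i j]) auto
  finally show ?thesis by (simp only: Let_def)
qed


lemma if0_mult: "(if P then a else 0) * (b::complex) = (if P then a*b else 0)" by simp
lemma mult_if0: "(b::complex) * (if P then a else 0) = (if P then b*a else 0)" by simp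
lemma cnj_if0: "cnj (if P then a else 0) = (if P then cnj a else 0)" by simp
lemma sum_if0: "(\<Sum>x\<in>A. if P then f x else (0::complex)) = (if P then (\<Sum>x\<in>A. f x) else 0)" by simp

definition Bf :: "nat \<Rightarrow> complex mat \<Rightarrow> (nat \<Rightarrow> complex) \<Rightarrow> (nat \<Rightarrow> complex) \<Rightarrow> complex" where
  "Bf n \<sigma> g h = (\<Sum>s<n. \<Sum>t<n. cnj (g s) * \<sigma> $$ (s,t) * h t)"

lemma Bf_psd:
  assumes "positive_semidef n \<sigma>"
  shows "Im (Bf n \<sigma> g g) = 0" "Re (Bf n \<sigma> g g) \<ge> 0"
proof -
  have sc: "\<sigma> \<in> carrier_mat n n" using assms by (simp add: positive_semidef_def)
  let ?v = "vec n g"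
  have "cinner ?v (\<sigma> *\<^sub>v ?v) = (\<Sum>s<n. cnj (g s) * (\<Sum>t<n. \<sigma> $$ (s,t) * g t))"
    unfolding cinner_def using sc by (intro sum.cong refl) (auto simp: scalar_prod_def lessThan_atLeast0 intro!: sum.cong)
  also have "\<dots> = Bf n \<sigma> g g" unfolding Bf_def by (simp add: sum_distrib_left mult.assoc)
  finally have eq: "cinner ?v (\<sigma> *\<^sub>v ?v) = Bf n \<sigma> g g" .
  have "?v \<in> carrier_vec n" by simp
  with assms have "Im (cinner ?v (\<sigma> *\<^sub>v ?v)) = 0 \<and> 0 \<le> Re (cinner ?v (\<sigma> *\<^sub>v ?v))"
    unfolding positive_semidef_def by blast
  then show "Im (Bf n \<sigma> g g) = 0" "Re (Bf n \<sigma> g g) \<ge> 0" using eq by auto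
qed

lemma Bf_subL: "Bf n \<sigma> (\<lambda>s. g1 s - g2 s) h = Bf n \<sigma> g1 h - Bf n \<sigma> g2 h"
  unfolding Bf_def by (simp add: algebra_simps sum_subtractf)
lemma Bf_subR: "Bf n \<sigma> g (\<lambda>s. h1 s - h2 s) = Bf n \<sigma> g h1 - Bf n \<sigma> g h2"
  unfolding Bf_def by (simp add: algebra_simps sum_subtractf)
lemma Bf_addL: "Bf n \<sigma> (\<lambda>s. g1 s + g2 s) h = Bf n \<sigma> g1 h + Bf n \<sigma> g2 h"
  unfolding Bf_def by (simp add: algebra_simps sum.distrib)
lemma Bf_addR: "Bf n \<sigma> g (\<lambda>s. h1 s + h2 s) = Bf n \<sigma> g h1 + Bf n \<sigma> g h2"
  unfolding Bf_def by (simp add: algebra_simps sum.distrib)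
lemma Bf_smultL: "Bf n \<sigma> (\<lambda>s. c * g s) h = cnj c * Bf n \<sigma> g h"
  unfolding Bf_def by (simp add: sum_distrib_left mult_ac)
lemma Bf_smultR: "Bf n \<sigma> g (\<lambda>s. c * h s) = c * Bf n \<sigma> g h"
  unfolding Bf_def by (simp add: sum_distrib_left mult_ac)

lemma Bf_ineq:
  assumes "positive_semidef n \<sigma>"
  shows "Re (Bf n \<sigma> g g) + Re (Bf n \<sigma> h h) \<ge> 2 * Re (Bf n \<sigma> h g)"
proof -
  have "Bf n \<sigma> (\<lambda>s. g s - h s) (\<lambda>s. g s - h s) = Bf n \<sigma> g g - Bf n \<sigma> g h - (Bf n \<sigma> h g - Bf n \<sigma> h h)"
    by (simp add: Bf_subL Bf_subR)
  moreover have "Bf n \<sigma> (\<lambda>s. g s + \<i> * h s) (\<lambda>s. g s + \<i> * h s) = Bf n \<sigma> g g + \<i> * Bf n \<sigma> g h + (- \<i> * Bf n \<sigma> h g + Bf n \<sigma> h h)"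
    by (simp add: Bf_addL Bf_addR Bf_smultL Bf_smultR algebra_simps)
  ultimately have 1: "Re (Bf n \<sigma> g g - Bf n \<sigma> g h - (Bf n \<sigma> h g - Bf n \<sigma> h h)) \<ge> 0"
    and 2: "Im (Bf n \<sigma> g g + \<i> * Bf n \<sigma> g h + (- \<i> * Bf n \<sigma> h g + Bf n \<sigma> h h)) = 0"
    using Bf_psd[OF assms] by metis+
  have 3: "Im (Bf n \<sigma> g g) = 0" "Im (Bf n \<sigma> h h) = 0" using Bf_psd[OF assms] by auto
  from 2 3 have "Re (Bf n \<sigma> g h) = Re (Bf n \<sigma> h g)" by simp
  with 1 show ?thesis by simp
qed

lemma Bf_fl: "Bf (e*f) \<sigma> g h = (\<Sum>k1<e. \<Sum>l1<f. \<Sum>k2<e. \<Sum>l2<f. cnj (g (k1*f+l1)) * \<sigma> $$ (k1*f+l1, k2*f+l2) * h (k2*f+l2))"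
  unfolding Bf_def by (simp only: sum_prod_split)


lemma swap_1_2: "(\<Sum>i\<in>I. \<Sum>a\<in>A. \<Sum>b\<in>B. f i a b) = (\<Sum>a\<in>A. \<Sum>b\<in>B. \<Sum>i\<in>I. (f i a b :: complex))"
  by (subst sum.swap, intro sum.cong refl, rule sum.swap)

lemma swap_1_3: "(\<Sum>i\<in>I. \<Sum>a\<in>A. \<Sum>b\<in>B. \<Sum>c\<in>C. f i a b c) = (\<Sum>a\<in>A. \<Sum>b\<in>B. \<Sum>c\<in>C. \<Sum>i\<in>I. (f i a b c :: complex))"
  by (subst sum.swap, intro sum.cong refl, rule swap_1_2)

lemma swap_1_4: "(\<Sum>i\<in>I. \<Sum>a\<in>A. \<Sum>b\<in>B. \<Sum>c\<in>C. \<Sum>d\<in>D. f i a b c d) = (\<Sum>a\<in>A. \<Sum>b\<in>B. \<Sum>c\<in>C. \<Sum>d\<in>D. \<Sum>i\<in>I. (f i a b c d :: complex))"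
  by (subst sum.swap, intro sum.cong refl, rule swap_1_3)

lemma swap_2_2: "(\<Sum>a\<in>A. \<Sum>b\<in>B. \<Sum>c\<in>C. \<Sum>d\<in>D. f a b c d) = (\<Sum>c\<in>C. \<Sum>d\<in>D. \<Sum>a\<in>A. \<Sum>b\<in>B. (f a b c d :: complex))"
proof -
  have "(\<Sum>a\<in>A. \<Sum>b\<in>B. \<Sum>c\<in>C. \<Sum>d\<in>D. f a b c d) = (\<Sum>a\<in>A. \<Sum>c\<in>C. \<Sum>d\<in>D. \<Sum>b\<in>B. f a b c d)"
    by (intro sum.cong refl, rule swap_1_2)
  also have "\<dots> = (\<Sum>c\<in>C. \<Sum>d\<in>D. \<Sum>a\<in>A. \<Sum>b\<in>B. f a b c d)" by (rule swap_1_2)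
  finally show ?thesis .
qed

lemma swap_2_3: "(\<Sum>a\<in>A. \<Sum>b\<in>B. \<Sum>c\<in>C. \<Sum>d\<in>D. \<Sum>x\<in>E. f a b c d x) = (\<Sum>c\<in>C. \<Sum>d\<in>D. \<Sum>x\<in>E. \<Sum>a\<in>A. \<Sum>b\<in>B. (f a b c d x :: complex))"
proof -
  have "(\<Sum>a\<in>A. \<Sum>b\<in>B. \<Sum>c\<in>C. \<Sum>d\<in>D. \<Sum>x\<in>E. f a b c d x) = (\<Sum>a\<in>A. \<Sum>c\<in>C. \<Sum>d\<in>D. \<Sum>x\<in>E. \<Sum>b\<in>B. f a b c d x)"
    by (intro sum.cong refl, rule swap_1_3)
  also have "\<dots> = (\<Sum>c\<in>C. \<Sum>d\<in>D. \<Sum>x\<in>E. \<Sum>a\<in>A. \<Sum>b\<in>B. f a b c d x)" by (rule swap_1_3)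
  finally show ?thesis .
qed


definition Xc :: "nat \<Rightarrow> nat \<Rightarrow> complex vec \<Rightarrow> complex mat \<Rightarrow> nat \<Rightarrow> nat \<Rightarrow> nat \<Rightarrow> complex" where
  "Xc d e \<psi> V a k' k = (\<Sum>i<d. cnj (\<psi> $ i) * V $$ (i*e+k', a*e+k))"

definition xf :: "nat \<Rightarrow> nat \<Rightarrow> nat \<Rightarrow> complex vec \<Rightarrow> complex mat \<Rightarrow> nat \<Rightarrow> nat \<Rightarrow> nat \<Rightarrow> nat \<Rightarrow> complex" where
  "xf d e f \<psi> V a k l s = (if s mod f = l then Xc d e \<psi> V a (s div f) k else 0)"

definition yf :: "nat \<Rightarrow> nat \<Rightarrow> nat \<Rightarrow> complex vec \<Rightarrow> complex mat \<Rightarrow> nat \<Rightarrow> nat \<Rightarrow> nat \<Rightarrow> nat \<Rightarrow> complex" where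
  "yf d e f \<psi> W a k l s = (if s div f = k then Xc d f \<psi> W a (s mod f) l else 0)"

definition Fs :: "nat \<Rightarrow> nat \<Rightarrow> nat \<Rightarrow> complex mat \<Rightarrow> complex mat \<Rightarrow> complex mat \<Rightarrow> nat \<Rightarrow> nat \<Rightarrow> nat \<Rightarrow> complex" where
  "Fs d e f V W \<sigma> a i j = (\<Sum>k<e. \<Sum>l<f. \<Sum>k'<e. V $$ (i*e+k, a*e+k') * (\<Sum>l'<f. \<sigma> $$ (k'*f+l, k*f+l') * cnj (W $$ (j*f+l, a*f+l'))))"

lemma yf_at: "l1 < f \<Longrightarrow> yf d e f \<psi> W a kr lr (k1*f+l1) = (if k1 = kr then Xc d f \<psi> W a l1 lr else 0)"
  unfolding yf_def using div_lem[of l1 f k1] mod_lem[of l1 f k1] by simp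

lemma xf_at: "l1 < f \<Longrightarrow> xf d e f \<psi> V a kr lr (k1*f+l1) = (if l1 = lr then Xc d e \<psi> V a k1 kr else 0)"
  unfolding xf_def using div_lem[of l1 f k1] mod_lem[of l1 f k1] by simp

lemma F1:
  "(\<Sum>kr<e. \<Sum>lr<f. Bf (e*f) \<sigma> (yf d e f \<psi> W a kr lr) (xf d e f \<psi> V a kr lr))
   = (\<Sum>i<d. \<Sum>j<d. cnj (\<psi> $ i) * \<psi> $ j * Fs d e f V W \<sigma> a i j)"
proof -
  define t where "t = (\<lambda>kr lr k2 l1 i j. cnj (\<psi> $ i) * \<psi> $ j * V $$ (i*e+k2, a*e+kr) * \<sigma> $$ (kr*f+l1, k2*f+lr) * cnj (W $$ (j*f+l1, a*f+lr)))"
  have L1: "Bf (e*f) \<sigma> (yf d e f \<psi> W a kr lr) (xf d e f \<psi> V a kr lr)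
      = (\<Sum>l1<f. \<Sum>k2<e. cnj (Xc d f \<psi> W a l1 lr) * \<sigma> $$ (kr*f+l1, k2*f+lr) * Xc d e \<psi> V a k2 kr)"
    if "kr < e" "lr < f" for kr lr
  proof -
    have "Bf (e*f) \<sigma> (yf d e f \<psi> W a kr lr) (xf d e f \<psi> V a kr lr)
       = (\<Sum>k1<e. \<Sum>l1<f. \<Sum>k2<e. \<Sum>l2<f. cnj (yf d e f \<psi> W a kr lr (k1*f+l1)) * \<sigma> $$ (k1*f+l1, k2*f+l2) * xf d e f \<psi> V a kr lr (k2*f+l2))"
      by (rule Bf_fl)
    also have "\<dots> = (\<Sum>k1<e. \<Sum>l1<f. \<Sum>k2<e. \<Sum>l2<f. cnj (if k1 = kr then Xc d f \<psi> W a l1 lr else 0) * \<sigma> $$ (k1*f+l1, k2*f+l2) * (if l2 = lr then Xc d e \<psi> V a k2 kr else 0))"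
      by (intro sum.cong refl) (simp add: yf_at xf_at)
    also have "\<dots> = (\<Sum>l1<f. \<Sum>k2<e. cnj (Xc d f \<psi> W a l1 lr) * \<sigma> $$ (kr*f+l1, k2*f+lr) * Xc d e \<psi> V a k2 kr)"
      using that by (simp add: cnj_if0 if0_mult mult_if0 sum_if0)
    finally show ?thesis .
  qed
  have L2: "cnj (Xc d f \<psi> W a l1 lr) * \<sigma> $$ (kr*f+l1, k2*f+lr) * Xc d e \<psi> V a k2 kr = (\<Sum>i<d. \<Sum>j<d. t kr lr k2 l1 i j)"
    for kr lr l1 k2
    unfolding Xc_def t_def by (simp add: sum_distrib_left sum_distrib_right mult_ac) (rule sum.swap)
  have "(\<Sum>kr<e. \<Sum>lr<f. Bf (e*f) \<sigma> (yf d e f \<psi> W a kr lr) (xf d e f \<psi> V a kr lr))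
     = (\<Sum>kr<e. \<Sum>lr<f. \<Sum>l1<f. \<Sum>k2<e. \<Sum>i<d. \<Sum>j<d. t kr lr k2 l1 i j)"
    by (intro sum.cong refl) (simp add: L1 L2)
  also have "\<dots> = (\<Sum>kr<e. \<Sum>lr<f. \<Sum>k2<e. \<Sum>l1<f. \<Sum>i<d. \<Sum>j<d. t kr lr k2 l1 i j)"
    by (rule sum.cong[OF refl], rule sum.cong[OF refl], rule sum.swap)
  also have "\<dots> = (\<Sum>k2<e. \<Sum>l1<f. \<Sum>kr<e. \<Sum>lr<f. \<Sum>i<d. \<Sum>j<d. t kr lr k2 l1 i j)"
    by (rule swap_2_2)
  also have "\<dots> = (\<Sum>i<d. \<Sum>k2<e. \<Sum>l1<f. \<Sum>kr<e. \<Sum>lr<f. \<Sum>j<d. t kr lr k2 l1 i j)"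
    by (rule swap_1_4[symmetric])
  also have "\<dots> = (\<Sum>i<d. \<Sum>j<d. \<Sum>k2<e. \<Sum>l1<f. \<Sum>kr<e. \<Sum>lr<f. t kr lr k2 l1 i j)"
    by (rule sum.cong[OF refl], rule swap_1_4[symmetric])
  also have "\<dots> = (\<Sum>i<d. \<Sum>j<d. cnj (\<psi> $ i) * \<psi> $ j * Fs d e f V W \<sigma> a i j)"
    unfolding Fs_def t_def by (simp add: sum_distrib_left mult_ac)
  finally show ?thesis .
qed


lemma unit_sum:
  assumes U: "unitary_mat (d*e) V" and p: "p < d*e" and q: "q < d*e"
  shows "(\<Sum>a<d. \<Sum>k<e. V $$ (p, a*e+k) * cnj (V $$ (q, a*e+k))) = (if p = q then 1 else 0)"
proof -
  have Vc: "V \<in> carrier_mat (d*e) (d*e)" and VV: "V * adj V = 1\<^sub>m (d*e)" using U by (auto simp: unitary_mat_def)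
  have "(V * adj V) $$ (p,q) = (\<Sum>s<d*e. V $$ (p,s) * adj V $$ (s,q))"
    using Vc p q by (subst mult_entry) auto
  also have "\<dots> = (\<Sum>s<d*e. V $$ (p,s) * cnj (V $$ (q,s)))"
    using Vc q by (intro sum.cong refl) auto
  also have "\<dots> = (\<Sum>a<d. \<Sum>k<e. V $$ (p, a*e+k) * cnj (V $$ (q, a*e+k)))"
    by (rule sum_prod_split)
  finally show ?thesis using VV p q by simp
qed

lemma idx_eq: "k1 < e \<Longrightarrow> k2 < e \<Longrightarrow> (i*e+k1 = i'*e+(k2::nat)) = (i = i' \<and> k1 = k2)"
  by (metis div_lem mod_lem)

lemma XX:
  assumes U: "unitary_mat (d*e) V" and psi: "cinner \<psi> \<psi> = 1" "\<psi> \<in> carrier_vec d"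
    and k1: "k1 < e" and k2: "k2 < e"
  shows "(\<Sum>a<d. \<Sum>k<e. cnj (Xc d e \<psi> V a k1 k) * Xc d e \<psi> V a k2 k) = (if k1 = k2 then 1 else 0)"
proof -
  have "(\<Sum>a<d. \<Sum>k<e. cnj (Xc d e \<psi> V a k1 k) * Xc d e \<psi> V a k2 k)
      = (\<Sum>a<d. \<Sum>k<e. \<Sum>i<d. \<Sum>i'<d. \<psi> $ i * cnj (\<psi> $ i') * (V $$ (i'*e+k2, a*e+k) * cnj (V $$ (i*e+k1, a*e+k))))"
    unfolding Xc_def by (simp add: sum_distrib_left sum_distrib_right mult_ac) (rule sum.cong[OF refl], rule sum.cong[OF refl], rule sum.swap)
  also have "\<dots> = (\<Sum>i<d. \<Sum>i'<d. \<Sum>a<d. \<Sum>k<e. \<psi> $ i * cnj (\<psi> $ i') * (V $$ (i'*e+k2, a*e+k) * cnj (V $$ (i*e+k1, a*e+k))))"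
    by (rule swap_2_2)
  also have "\<dots> = (\<Sum>i<d. \<Sum>i'<d. \<psi> $ i * cnj (\<psi> $ i') * (if i' = i \<and> k2 = k1 then 1 else 0))"
  proof (intro sum.cong refl)
    fix i i' assume i: "i \<in> {..<d}" and i': "i' \<in> {..<d}"
    have b: "i'*e+k2 < d*e" "i*e+k1 < d*e" using ak_less i i' k1 k2 by auto
    show "(\<Sum>a<d. \<Sum>k<e. \<psi> $ i * cnj (\<psi> $ i') * (V $$ (i'*e+k2, a*e+k) * cnj (V $$ (i*e+k1, a*e+k))))
        = \<psi> $ i * cnj (\<psi> $ i') * (if i' = i \<and> k2 = k1 then 1 else 0)"
      by (simp add: sum_distrib_left[symmetric] unit_sum[OF U b] idx_eq k1 k2)
  qed
  also have "\<dots> = (if k1 = k2 then (\<Sum>i<d. \<psi> $ i * cnj (\<psi> $ i)) else 0)"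
    by (auto simp: if_distrib cong: if_cong)
  also have "\<dots> = (if k1 = k2 then 1 else 0)"
  proof -
    have "(\<Sum>i<d. \<psi> $ i * cnj (\<psi> $ i)) = cinner \<psi> \<psi>"
      unfolding cinner_def using psi by (simp add: mult.commute)
    then show ?thesis using psi by simp
  qed
  finally show ?thesis .
qed


lemma tr_fl: "\<sigma> \<in> carrier_mat (e*f) (e*f) \<Longrightarrow> tr \<sigma> = (\<Sum>k<e. \<Sum>l<f. \<sigma> $$ (k*f+l, k*f+l))"
  unfolding tr_def by (simp add: sum_prod_split)

lemma F2:
  assumes U: "unitary_mat (d*e) V" and psi: "cinner \<psi> \<psi> = 1" "\<psi> \<in> carrier_vec d"
    and sig: "\<sigma> \<in> carrier_mat (e*f) (e*f)"
  shows "(\<Sum>a<d. \<Sum>k<e. \<Sum>l<f. Bf (e*f) \<sigma> (xf d e f \<psi> V a k l) (xf d e f \<psi> V a k l)) = tr \<sigma>"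
proof -
  have Bxx: "Bf (e*f) \<sigma> (xf d e f \<psi> V a k l) (xf d e f \<psi> V a k l)
     = (\<Sum>k1<e. \<Sum>k2<e. \<sigma> $$ (k1*f+l, k2*f+l) * (cnj (Xc d e \<psi> V a k1 k) * Xc d e \<psi> V a k2 k))"
    if "k < e" "l < f" for a k l
  proof -
    have "Bf (e*f) \<sigma> (xf d e f \<psi> V a k l) (xf d e f \<psi> V a k l)
       = (\<Sum>k1<e. \<Sum>l1<f. \<Sum>k2<e. \<Sum>l2<f. cnj (xf d e f \<psi> V a k l (k1*f+l1)) * \<sigma> $$ (k1*f+l1, k2*f+l2) * xf d e f \<psi> V a k l (k2*f+l2))"
      by (rule Bf_fl)
    also have "\<dots> = (\<Sum>k1<e. \<Sum>l1<f. \<Sum>k2<e. \<Sum>l2<f. cnj (if l1 = l then Xc d e \<psi> V a k1 k else 0) * \<sigma> $$ (k1*f+l1, k2*f+l2) * (if l2 = l then Xc d e \<psi> V a k2 k else 0))"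
      by (intro sum.cong refl) (simp add: xf_at)
    also have "\<dots> = (\<Sum>k1<e. \<Sum>k2<e. \<sigma> $$ (k1*f+l, k2*f+l) * (cnj (Xc d e \<psi> V a k1 k) * Xc d e \<psi> V a k2 k))"
      using that by (simp add: cnj_if0 if0_mult mult_if0 sum_if0 mult_ac)
    finally show ?thesis .
  qed
  have "(\<Sum>a<d. \<Sum>k<e. \<Sum>l<f. Bf (e*f) \<sigma> (xf d e f \<psi> V a k l) (xf d e f \<psi> V a k l))
     = (\<Sum>a<d. \<Sum>k<e. \<Sum>l<f. \<Sum>k1<e. \<Sum>k2<e. \<sigma> $$ (k1*f+l, k2*f+l) * (cnj (Xc d e \<psi> V a k1 k) * Xc d e \<psi> V a k2 k))"
    by (intro sum.cong refl) (simp add: Bxx)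
  also have "\<dots> = (\<Sum>l<f. \<Sum>k1<e. \<Sum>k2<e. \<Sum>a<d. \<Sum>k<e. \<sigma> $$ (k1*f+l, k2*f+l) * (cnj (Xc d e \<psi> V a k1 k) * Xc d e \<psi> V a k2 k))"
    by (rule swap_2_3)
  also have "\<dots> = (\<Sum>l<f. \<Sum>k1<e. \<Sum>k2<e. \<sigma> $$ (k1*f+l, k2*f+l) * (if k1 = k2 then 1 else 0))"
    by (intro sum.cong refl) (simp add: sum_distrib_left[symmetric] XX[OF U psi])
  also have "\<dots> = (\<Sum>l<f. \<Sum>k1<e. \<sigma> $$ (k1*f+l, k1*f+l))"
    by (simp add: mult_if0)
  also have "\<dots> = tr \<sigma>" unfolding tr_fl[OF sig] by (rule sum.swap)
  finally show ?thesis .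
qed

lemma yf_at2: "l1 < f \<Longrightarrow> yf d e f \<psi> W a k l (k1*f+l1) = (if k1 = k then Xc d f \<psi> W a l1 l else 0)"
  by (rule yf_at)

lemma F3:
  assumes U: "unitary_mat (d*f) W" and psi: "cinner \<psi> \<psi> = 1" "\<psi> \<in> carrier_vec d"
    and sig: "\<sigma> \<in> carrier_mat (e*f) (e*f)"
  shows "(\<Sum>a<d. \<Sum>k<e. \<Sum>l<f. Bf (e*f) \<sigma> (yf d e f \<psi> W a k l) (yf d e f \<psi> W a k l)) = tr \<sigma>"
proof -
  have Byy: "Bf (e*f) \<sigma> (yf d e f \<psi> W a k l) (yf d e f \<psi> W a k l)
     = (\<Sum>l1<f. \<Sum>l2<f. \<sigma> $$ (k*f+l1, k*f+l2) * (cnj (Xc d f \<psi> W a l1 l) * Xc d f \<psi> W a l2 l))"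
    if "k < e" "l < f" for a k l
  proof -
    have "Bf (e*f) \<sigma> (yf d e f \<psi> W a k l) (yf d e f \<psi> W a k l)
       = (\<Sum>k1<e. \<Sum>l1<f. \<Sum>k2<e. \<Sum>l2<f. cnj (yf d e f \<psi> W a k l (k1*f+l1)) * \<sigma> $$ (k1*f+l1, k2*f+l2) * yf d e f \<psi> W a k l (k2*f+l2))"
      by (rule Bf_fl)
    also have "\<dots> = (\<Sum>k1<e. \<Sum>l1<f. \<Sum>k2<e. \<Sum>l2<f. cnj (if k1 = k then Xc d f \<psi> W a l1 l else 0) * \<sigma> $$ (k1*f+l1, k2*f+l2) * (if k2 = k then Xc d f \<psi> W a l2 l else 0))"
      by (intro sum.cong refl) (simp add: yf_at2)
    also have "\<dots> = (\<Sum>l1<f. \<Sum>l2<f. \<sigma> $$ (k*f+l1, k*f+l2) * (cnj (Xc d f \<psi> W a l1 l) * Xc d f \<psi> W a l2 l))"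
      using that by (simp add: cnj_if0 if0_mult mult_if0 sum_if0 mult_ac)
    finally show ?thesis .
  qed
  have "(\<Sum>a<d. \<Sum>k<e. \<Sum>l<f. Bf (e*f) \<sigma> (yf d e f \<psi> W a k l) (yf d e f \<psi> W a k l))
     = (\<Sum>a<d. \<Sum>k<e. \<Sum>l<f. \<Sum>l1<f. \<Sum>l2<f. \<sigma> $$ (k*f+l1, k*f+l2) * (cnj (Xc d f \<psi> W a l1 l) * Xc d f \<psi> W a l2 l))"
    by (intro sum.cong refl) (simp add: Byy)
  also have "\<dots> = (\<Sum>k<e. \<Sum>a<d. \<Sum>l<f. \<Sum>l1<f. \<Sum>l2<f. \<sigma> $$ (k*f+l1, k*f+l2) * (cnj (Xc d f \<psi> W a l1 l) * Xc d f \<psi> W a l2 l))"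
    by (rule sum.swap)
  also have "\<dots> = (\<Sum>k<e. \<Sum>l1<f. \<Sum>l2<f. \<Sum>a<d. \<Sum>l<f. \<sigma> $$ (k*f+l1, k*f+l2) * (cnj (Xc d f \<psi> W a l1 l) * Xc d f \<psi> W a l2 l))"
    by (rule sum.cong[OF refl], rule swap_2_2)
  also have "\<dots> = (\<Sum>k<e. \<Sum>l1<f. \<Sum>l2<f. \<sigma> $$ (k*f+l1, k*f+l2) * (if l1 = l2 then 1 else 0))"
    by (intro sum.cong refl) (simp add: sum_distrib_left[symmetric] XX[OF U psi])
  also have "\<dots> = (\<Sum>k<e. \<Sum>l1<f. \<sigma> $$ (k*f+l1, k*f+l1))"
    by (simp add: mult_if0)
  also have "\<dots> = tr \<sigma>" unfolding tr_fl[OF sig] ..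
  finally show ?thesis .
qed


lemma LHS_entry:
  assumes psi: "\<psi> \<in> carrier_vec d" and rho: "\<rho> \<in> carrier_mat d d" and om: "\<omega> \<in> carrier_mat 2 2"
    and i: "i < d" and j: "j < d"
  shows "chanC d \<psi> (kron \<rho> \<omega>) $$ (2*i, 2*j+1) = \<psi> $ i * cnj (\<psi> $ j) * (\<Sum>k<d. \<rho> $$ (k,k) * \<omega> $$ (0,1))"
proof -
  have kb: "ketbra \<psi> \<in> carrier_mat d d" using psi by (simp add: ketbra_def)
  have pt: "ptrace1 d 2 (kron \<rho> \<omega>) \<in> carrier_mat 2 2" by (simp add: ptrace1_def)
  have b: "2*i < d*2" "2*j+1 < d*2" using i j by auto
  have "chanC d \<psi> (kron \<rho> \<omega>) $$ (2*i, 2*j+1) = ketbra \<psi> $$ (i, j) * ptrace1 d 2 (kron \<rho> \<omega>) $$ (0, 1)"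
    unfolding chanC_def using kb pt b by (subst kron_entry) auto
  also have "\<dots> = \<psi> $ i * cnj (\<psi> $ j) * (\<Sum>k<d. kron \<rho> \<omega> $$ (k*2, k*2+1))"
    using psi i j by (simp add: ketbra_def ptrace1_def)
  also have "(\<Sum>k<d. kron \<rho> \<omega> $$ (k*2, k*2+1)) = (\<Sum>k<d. \<rho> $$ (k,k) * \<omega> $$ (0,1))"
  proof (intro sum.cong refl)
    fix k assume k: "k \<in> {..<d}"
    have kb: "k*2+1 < d*2" using k by auto
    have m: "Suc (k*2) mod 2 = 1" "Suc (k*2) div 2 = k" by presburger+
    show "kron \<rho> \<omega> $$ (k*2, k*2+1) = \<rho> $$ (k,k) * \<omega> $$ (0,1)"
      using rho om kb by (subst kron_entry) (auto simp: m)
  qed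
  finally show ?thesis .
qed

definition rhoa :: "nat \<Rightarrow> nat \<Rightarrow> complex mat" where
  "rhoa d a = mat d d (\<lambda>(x,y). if x = a then (if y = a then 1 else 0) else 0)"

definition omp :: "complex mat" where
  "omp = mat 2 2 (\<lambda>_. 1/2)"

lemma cnj_mult_self: "Im (cnj z * z) = 0 \<and> Re (cnj z * z) \<ge> 0"
  by (simp add: algebra_simps)

lemma rhoa_density: "a < d \<Longrightarrow> density d (rhoa d a)"
proof -
  assume a: "a < d"
  have c: "rhoa d a \<in> carrier_mat d d" by (simp add: rhoa_def)
  have "cinner v (rhoa d a *\<^sub>v v) = cnj (v $ a) * v $ a" if v: "v \<in> carrier_vec d" for v
  proof -
    have r: "(rhoa d a *\<^sub>v v) $ x = (if x = a then v $ a else 0)" if x: "x < d" for x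
    proof -
      have "(rhoa d a *\<^sub>v v) $ x = (\<Sum>t\<in>{0..<d}. (if x = a then (if t = a then 1 else 0) else 0) * v $ t)"
        using x v by (simp add: rhoa_def scalar_prod_def)
      also have "\<dots> = (if x = a then v $ a else 0)" using a by (simp add: if0_mult)
      finally show ?thesis .
    qed
    have "cinner v (rhoa d a *\<^sub>v v) = (\<Sum>x<d. cnj (v $ x) * (if x = a then v $ a else 0))"
      unfolding cinner_def using v r by (intro sum.cong) auto
    also have "\<dots> = cnj (v $ a) * v $ a" using a by (simp add: mult_if0)
    finally show ?thesis .
  qed
  then have p: "positive_semidef d (rhoa d a)" unfolding positive_semidef_def using c cnj_mult_self by auto
  have "tr (rhoa d a) = 1" unfolding tr_def rhoa_def using a by simp
  then show ?thesis using p by (simp add: density_def)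
qed

lemma cnj_half: "Im (cnj z * z / 2) = 0 \<and> Re (cnj z * z / 2) \<ge> 0"
  by (simp add: algebra_simps)

lemma omp_density: "density 2 omp"
proof -
  have c: "omp \<in> carrier_mat 2 2" by (simp add: omp_def)
  have eq: "cinner v (omp *\<^sub>v v) = cnj (v $ 0 + v $ 1) * (v $ 0 + v $ 1) / 2" if v: "v \<in> carrier_vec 2" for v
  proof -
    have r: "(omp *\<^sub>v v) $ x = (v $ 0 + v $ 1) / 2" if x: "x < 2" for x
      using x v by (simp add: omp_def scalar_prod_def numeral_2_eq_2 lessThan_Suc add_divide_distrib)
    have "cinner v (omp *\<^sub>v v) = (\<Sum>x<2. cnj (v $ x) * ((v $ 0 + v $ 1) / 2))"
      unfolding cinner_def using v r by (intro sum.cong) auto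
    also have "\<dots> = (cnj (v $ 0) + cnj (v $ 1)) * ((v $ 0 + v $ 1) / 2)"
      by (simp add: numeral_2_eq_2 distrib_right)
    also have "\<dots> = cnj (v $ 0 + v $ 1) * (v $ 0 + v $ 1) / 2"
      by simp
    finally show ?thesis .
  qed
  have p: "positive_semidef 2 omp" unfolding positive_semidef_def
  proof (rule conjI[OF c], intro ballI)
    fix v :: "complex vec" assume v: "v \<in> carrier_vec 2"
    show "Im (cinner v (omp *\<^sub>v v)) = 0 \<and> 0 \<le> Re (cinner v (omp *\<^sub>v v))"
      unfolding eq[OF v] by (rule cnj_half)
  qed
  have "tr omp = 1" unfolding tr_def omp_def by (simp add: numeral_2_eq_2)
  then show ?thesis using p by (simp add: density_def)
qed


lemma rhoa_entry: "x < d \<Longrightarrow> y < d \<Longrightarrow> rhoa d a $$ (x,y) = (if x = a then (if y = a then 1 else 0) else 0)"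
  by (simp add: rhoa_def)

lemma if0_div: "(if P then a else 0) / (c::complex) = (if P then a / c else 0)" by simp

lemma omp01: "omp $$ (0, Suc 0) = 1/2" by (simp add: omp_def)

theorem proposition1:
  fixes d :: nat and \<psi>0 :: "complex vec"
  assumes "d \<ge> 2"
    and "\<psi>0 \<in> carrier_vec d" and "cinner \<psi>0 \<psi>0 = 1"
  shows "\<not> (\<exists>(e::nat) (f::nat) \<sigma> V W.
            density (e*f) \<sigma> \<and> unitary_mat (d*e) V \<and> unitary_mat (d*f) W \<and>
            (\<forall>\<rho> \<omega>. density d \<rho> \<longrightarrow> density 2 \<omega> \<longrightarrow>
               chanC d \<psi>0 (kron \<rho> \<omega>) =
               adj (Umat d) *
                 ptrace2 ((d+1)*(d+1)) (e*f)
                   (let T = VW_op d e f V W in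
                      T * kron (Umat d * kron \<rho> \<omega> * adj (Umat d)) \<sigma> * adj T)
               * Umat d))"
proof
  assume "\<exists>(e::nat) (f::nat) \<sigma> V W.
            density (e*f) \<sigma> \<and> unitary_mat (d*e) V \<and> unitary_mat (d*f) W \<and>
            (\<forall>\<rho> \<omega>. density d \<rho> \<longrightarrow> density 2 \<omega> \<longrightarrow>
               chanC d \<psi>0 (kron \<rho> \<omega>) =
               adj (Umat d) *
                 ptrace2 ((d+1)*(d+1)) (e*f)
                   (let T = VW_op d e f V W in
                      T * kron (Umat d * kron \<rho> \<omega> * adj (Umat d)) \<sigma> * adj T)
               * Umat d)"
  then obtain e f \<sigma> V W where den: "density (e*f) \<sigma>" and UV: "unitary_mat (d*e) V" and UW: "unitary_mat (d*f) W"
    and H: "\<And>\<rho> \<omega>. density d \<rho> \<Longrightarrow> density 2 \<omega> \<Longrightarrow>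
               chanC d \<psi>0 (kron \<rho> \<omega>) =
               adj (Umat d) *
                 ptrace2 ((d+1)*(d+1)) (e*f)
                   (let T = VW_op d e f V W in
                      T * kron (Umat d * kron \<rho> \<omega> * adj (Umat d)) \<sigma> * adj T)
               * Umat d"
    by blast
  have psi: "cinner \<psi>0 \<psi>0 = 1" "\<psi>0 \<in> carrier_vec d" using assms by auto
  have psd: "positive_semidef (e*f) \<sigma>" and tr1: "tr \<sigma> = 1" using den by (auto simp: density_def)
  have sig: "\<sigma> \<in> carrier_mat (e*f) (e*f)" using psd by (simp add: positive_semidef_def)
  have Vc: "V \<in> carrier_mat (d*e) (d*e)" using UV by (simp add: unitary_mat_def)
  have Wc: "W \<in> carrier_mat (d*f) (d*f)" using UW by (simp add: unitary_mat_def)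
  have omc: "omp \<in> carrier_mat 2 2" by (simp add: omp_def)
  have om01: "omp $$ (0,1) = 1/2" by (simp add: omp_def)
  have Fs_eq: "Fs d e f V W \<sigma> a i j = \<psi>0 $ i * cnj (\<psi>0 $ j)" if a: "a < d" and i: "i < d" and j: "j < d" for a i j
  proof -
    have rc: "rhoa d a \<in> carrier_mat d d" by (simp add: rhoa_def)
    have re: "rhoa d a $$ (x,y) = (if x = a then (if y = a then 1 else 0) else 0)" if "x < d" "y < d" for x y
      using that by (simp add: rhoa_def)
    note E = H[OF rhoa_density[OF a] omp_density]
    have "chanC d \<psi>0 (kron (rhoa d a) omp) $$ (2*i, 2*j+1) =
          (adj (Umat d) *
                 ptrace2 ((d+1)*(d+1)) (e*f)
                   (let T = VW_op d e f V W in
                      T * kron (Umat d * kron (rhoa d a) omp * adj (Umat d)) \<sigma> * adj T)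
               * Umat d) $$ (2*i, 2*j+1)"
      using E by (simp only:)
    also have "\<dots> = (\<Sum>k<e. \<Sum>l<f. \<Sum>a'<d. \<Sum>k'<e. V $$ (i*e+k, a'*e+k') * (\<Sum>b<d. \<Sum>l'<f. (rhoa d a $$ (a',b) * omp $$ (0,1) * \<sigma> $$ (k'*f+l, k*f+l')) * cnj (W $$ (j*f+l, b*f+l'))))"
      by (rule RHS_entry[OF Vc Wc sig rc omc i j])
    also have "\<dots> = (\<Sum>k<e. \<Sum>l<f. \<Sum>k'<e. V $$ (i*e+k, a*e+k') * (\<Sum>l'<f. (1/2 * \<sigma> $$ (k'*f+l, k*f+l')) * cnj (W $$ (j*f+l, a*f+l'))))"
      using a by (simp add: rhoa_entry om01 omp01 if0_mult mult_if0 sum_if0 if0_div)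
    also have "\<dots> = 1/2 * Fs d e f V W \<sigma> a i j"
      unfolding Fs_def by (simp add: sum_distrib_left mult_ac)
    finally have 1: "chanC d \<psi>0 (kron (rhoa d a) omp) $$ (2*i, 2*j+1) = 1/2 * Fs d e f V W \<sigma> a i j" .
    have "chanC d \<psi>0 (kron (rhoa d a) omp) $$ (2*i, 2*j+1) = \<psi>0 $ i * cnj (\<psi>0 $ j) * (\<Sum>k<d. rhoa d a $$ (k,k) * omp $$ (0,1))"
      by (rule LHS_entry[OF psi(2) rc omc i j])
    also have "(\<Sum>k<d. rhoa d a $$ (k,k) * omp $$ (0,1)) = 1/2"
      using a by (simp add: rhoa_entry om01 omp01 if0_mult if0_div)
    finally have 2: "chanC d \<psi>0 (kron (rhoa d a) omp) $$ (2*i, 2*j+1) = \<psi>0 $ i * cnj (\<psi>0 $ j) * (1/2)" .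
    from 1 2 show ?thesis by simp
  qed
  have S1: "(\<Sum>k<e. \<Sum>l<f. Bf (e*f) \<sigma> (yf d e f \<psi>0 W a k l) (xf d e f \<psi>0 V a k l)) = 1" if a: "a < d" for a
  proof -
    have "(\<Sum>k<e. \<Sum>l<f. Bf (e*f) \<sigma> (yf d e f \<psi>0 W a k l) (xf d e f \<psi>0 V a k l))
        = (\<Sum>i<d. \<Sum>j<d. cnj (\<psi>0 $ i) * \<psi>0 $ j * Fs d e f V W \<sigma> a i j)" by (rule F1)
    also have "\<dots> = (\<Sum>i<d. \<Sum>j<d. (cnj (\<psi>0 $ i) * \<psi>0 $ i) * (\<psi>0 $ j * cnj (\<psi>0 $ j)))"
      using a by (intro sum.cong refl) (simp add: Fs_eq mult_ac)
    also have "\<dots> = (\<Sum>i<d. cnj (\<psi>0 $ i) * \<psi>0 $ i) * (\<Sum>j<d. \<psi>0 $ j * cnj (\<psi>0 $ j))"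
      by (simp add: sum_product)
    also have "(\<Sum>i<d. cnj (\<psi>0 $ i) * \<psi>0 $ i) = 1" using psi unfolding cinner_def by simp
    also have "(\<Sum>j<d. \<psi>0 $ j * cnj (\<psi>0 $ j)) = 1" using psi unfolding cinner_def by (simp add: mult.commute)
    finally show ?thesis by simp
  qed
  have ineq: "(\<Sum>a<d. \<Sum>k<e. \<Sum>l<f. 2 * Re (Bf (e*f) \<sigma> (yf d e f \<psi>0 W a k l) (xf d e f \<psi>0 V a k l)))
      \<le> (\<Sum>a<d. \<Sum>k<e. \<Sum>l<f. Re (Bf (e*f) \<sigma> (xf d e f \<psi>0 V a k l) (xf d e f \<psi>0 V a k l)) + Re (Bf (e*f) \<sigma> (yf d e f \<psi>0 W a k l) (yf d e f \<psi>0 W a k l)))"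
    by (intro sum_mono) (rule Bf_ineq[OF psd])
  have "(\<Sum>a<d. \<Sum>k<e. \<Sum>l<f. Re (Bf (e*f) \<sigma> (xf d e f \<psi>0 V a k l) (xf d e f \<psi>0 V a k l)) + Re (Bf (e*f) \<sigma> (yf d e f \<psi>0 W a k l) (yf d e f \<psi>0 W a k l)))
      = Re (\<Sum>a<d. \<Sum>k<e. \<Sum>l<f. Bf (e*f) \<sigma> (xf d e f \<psi>0 V a k l) (xf d e f \<psi>0 V a k l)) + Re (\<Sum>a<d. \<Sum>k<e. \<Sum>l<f. Bf (e*f) \<sigma> (yf d e f \<psi>0 W a k l) (yf d e f \<psi>0 W a k l))"
    by (simp add: Re_sum sum.distrib)
  also have "\<dots> = 2" using F2[OF UV psi sig] F3[OF UW psi sig] tr1 by simp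
  finally have up: "(\<Sum>a<d. \<Sum>k<e. \<Sum>l<f. Re (Bf (e*f) \<sigma> (xf d e f \<psi>0 V a k l) (xf d e f \<psi>0 V a k l)) + Re (Bf (e*f) \<sigma> (yf d e f \<psi>0 W a k l) (yf d e f \<psi>0 W a k l))) = 2" .
  have "(\<Sum>a<d. \<Sum>k<e. \<Sum>l<f. 2 * Re (Bf (e*f) \<sigma> (yf d e f \<psi>0 W a k l) (xf d e f \<psi>0 V a k l)))
      = (\<Sum>a<d. 2 * Re (\<Sum>k<e. \<Sum>l<f. Bf (e*f) \<sigma> (yf d e f \<psi>0 W a k l) (xf d e f \<psi>0 V a k l)))"
    by (simp add: Re_sum sum_distrib_left)
  also have "\<dots> = (\<Sum>a<d. 2)" using S1 by (intro sum.cong refl) simp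
  also have "\<dots> = 2 * real d" by simp
  finally have lo: "(\<Sum>a<d. \<Sum>k<e. \<Sum>l<f. 2 * Re (Bf (e*f) \<sigma> (yf d e f \<psi>0 W a k l) (xf d e f \<psi>0 V a k l))) = 2 * real d" .
  from ineq up lo have "2 * real d \<le> 2" by simp
  with assms(1) show False by simp
qed

end
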